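(* The Laurent polynomial $f_\lambda$ is nondegenerate relative to $\Delta(A)$: for every face $\sigma$ of $\Delta(A)$ not containing the origin, the Laurent polynomials $x_i\partial f^\sigma_\lambda/\partial x_i$, $i=1,\dots,n$, have no common zero in $\big(\overline{\mathbb C(\lambda)}^\times\big)^n$.
   Context: Let $A=\{\mathbf a_1,\dots,\mathbf a_m\}\subseteq\mathbb Z^n$ be linearly independent over $\mathbb R$, $\mathbf a_0\in\mathbb Z^n$, and $\ell_0,\dots,\ell_m$ positive integers with gcd $1$ such that $\ell_0\mathbf a_0=\sum_{j=1}^m\ell_j\mathbf a_j$ and $\ell_0=\sum_{j=1}^m\ell_j$. Let $f_\lambda=\sum_{j=1}^m\ell_jx^{\mathbf a_j}-\ell_0\lambda x^{\mathbf a_0}$, $\lambda$ an indeterminate, and $\overline{\mathbb C(\lambda)}$ an algebraic closure of $\mathbb C(\lambda)$. Let $\Delta(A)$ be the convex hull of $A\cup\{\mathbf 0\}$. For a face $\sigma$ of $\Delta(A)$ not containing $\mathbf a_0$ set $f^\sigma_\lambda=\sum_{\mathbf a_j\in\sigma}\ell_jx^{\mathbf a_j}$; for a face containing $\mathbf a_0$ set $f^\sigma_\lambda=f_\lambda$. *)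

theory Defs
  imports "HOL-Analysis.Analysis" "HOL-Algebra.Algebraic_Closure_Type"
begin

text \<open>The coefficient field: an algebraic closure of C(lambda), with lambda an indeterminate.
  C(lambda) is the fraction field of complex polynomials.\<close>
type_synonym Kbar = "complex poly fract alg_closure"

definition lam :: Kbar where
  "lam = to_ac (Fract [:0, 1:] 1)"

definition rvec :: "int ^ 'n \<Rightarrow> real ^ 'n" where
  "rvec a = (\<chi> i. real_of_int (a $ i))"

definition lmono :: "('n::finite \<Rightarrow> 'k::field) \<Rightarrow> int ^ 'n \<Rightarrow> 'k" where
  "lmono x a = (\<Prod>i\<in>UNIV. x i powi (a $ i))"

text \<open>Laurent polynomials in n variables over 'k, as finitely supported coefficient functions.\<close>
definition laurent_eval :: "(int ^ 'n \<Rightarrow> 'k::field) \<Rightarrow> ('n::finite \<Rightarrow> 'k) \<Rightarrow> 'k" where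
  "laurent_eval p x = (\<Sum>a\<in>{a. p a \<noteq> 0}. p a * lmono x a)"

definition euler_deriv :: "'n \<Rightarrow> (int ^ 'n \<Rightarrow> 'k::field) \<Rightarrow> (int ^ 'n \<Rightarrow> 'k)" where
  "euler_deriv i p = (\<lambda>a. of_int (a $ i) * p a)"

text \<open>Coefficients of f_lambda = sum_{j=1..m} l_j x^{a_j} - l_0 lambda x^{a_0}.\<close>
definition f_lam :: "nat \<Rightarrow> (nat \<Rightarrow> int ^ 'n) \<Rightarrow> (nat \<Rightarrow> nat) \<Rightarrow> int ^ 'n \<Rightarrow> Kbar" where
  "f_lam m a l = (\<lambda>b. (\<Sum>j\<in>{j\<in>{1..m}. a j = b}. of_nat (l j))
                      - (if a 0 = b then of_nat (l 0) * lam else 0))"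

definition f_face :: "nat \<Rightarrow> (nat \<Rightarrow> int ^ 'n) \<Rightarrow> (nat \<Rightarrow> nat) \<Rightarrow> (real ^ 'n) set
                      \<Rightarrow> int ^ 'n \<Rightarrow> Kbar" where
  "f_face m a l \<sigma> = (if rvec (a 0) \<in> \<sigma> then f_lam m a l
      else (\<lambda>b. \<Sum>j\<in>{j\<in>{1..m}. a j = b \<and> rvec (a j) \<in> \<sigma>}. of_nat (l j)))"

definition DeltaA :: "nat \<Rightarrow> (nat \<Rightarrow> int ^ 'n) \<Rightarrow> (real ^ 'n) set" where
  "DeltaA m a = convex hull (insert 0 (rvec ` a ` {1..m}))"

end

theory Submission
  imports Defs
begin

instance fract :: ("{idom,ring_char_0}") ring_char_0
proof
  show "inj (of_nat :: nat \<Rightarrow> 'a fract)"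
    by (rule injI) (simp add: of_nat_fract eq_fract)
qed

instance fract :: ("{idom,ring_char_0}") field_char_0 ..

lemma indepK:
  fixes a :: "nat \<Rightarrow> int ^ 'n" and c :: "nat \<Rightarrow> 'k::field_char_0"
  assumes fin: "finite J"
    and ind: "\<And>r::nat\<Rightarrow>real. (\<Sum>j\<in>J. r j *\<^sub>R rvec (a j)) = 0 \<Longrightarrow> \<forall>j\<in>J. r j = 0"
    and eq: "\<And>i. (\<Sum>j\<in>J. c j * of_int (a j $ i)) = 0"
  shows "\<forall>j\<in>J. c j = 0"
proof (rule ccontr)
  assume "\<not> ?thesis"
  then obtain k where k: "k \<in> J" "c k \<noteq> 0" by auto
  interpret V: vector_space "\<lambda>(q::rat) (y::'k). of_rat q * y"
    by unfold_locales (auto simp: algebra_simps of_rat_add of_rat_mult)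
  interpret Q: vector_space "(*) :: rat \<Rightarrow> rat \<Rightarrow> rat"
    by unfold_locales (auto simp: algebra_simps)
  interpret P: vector_space_pair "\<lambda>(q::rat) (y::'k). of_rat q * y" "(*) :: rat \<Rightarrow> rat \<Rightarrow> rat"
    by unfold_locales
  have ind1: "V.independent {c k}"
    using k(2) by (simp add: V.independent_insert V.span_empty)
  obtain g where g: "Vector_Spaces.linear (\<lambda>(q::rat) (y::'k). of_rat q * y) (*) g" "g (c k) = 1"
    using P.linear_independent_extend[OF ind1, of "\<lambda>_. 1"] by auto
  have gint: "g (y * of_int n) = of_int n * g y" for y n
  proof -
    have "y * of_int n = of_rat (of_int n) * y" by (simp add: mult.commute)
    then show ?thesis using P.linear_scale[OF g(1)] by metis
  qed
  define r where "r j = real_of_rat (g (c j))" for j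
  have "(\<Sum>j\<in>J. r j *\<^sub>R rvec (a j)) = 0"
  proof (rule vec_eq_iff[THEN iffD2], rule allI)
    fix i
    have "(\<Sum>j\<in>J. r j *\<^sub>R rvec (a j)) $ i = real_of_rat (\<Sum>j\<in>J. g (c j * of_int (a j $ i)))"
      by (simp add: r_def rvec_def gint of_rat_sum of_rat_mult mult.commute)
    also have "\<dots> = real_of_rat (g (\<Sum>j\<in>J. c j * of_int (a j $ i)))"
      using P.linear_sum[OF g(1)] by metis
    also have "\<dots> = 0" using eq P.linear_0[OF g(1)] by simp
    finally show "(\<Sum>j\<in>J. r j *\<^sub>R rvec (a j)) $ i = 0 $ i" by simp
  qed
  then have "r k = 0" using ind k by blast
  then show False using g(2) by (simp add: r_def)
qed


lemma lmono_add: "(\<forall>i. x i \<noteq> 0) \<Longrightarrow> lmono x (b + c) = lmono x b * lmono x c"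
  unfolding lmono_def by (simp add: power_int_add prod.distrib)

lemma lmono_0: "lmono x 0 = 1"
  unfolding lmono_def by simp

lemma lmono_nz: "(\<forall>i. x i \<noteq> 0) \<Longrightarrow> lmono (x :: 'n::finite \<Rightarrow> 'k::field) b \<noteq> 0"
  unfolding lmono_def by (simp add: prod_zero_iff)

lemma lmono_smult:
  assumes "\<forall>i. x i \<noteq> 0"
  shows "lmono x (of_nat k *s b) = lmono x b ^ k"
proof (induction k)
  case 0
  have "(of_nat 0 :: int) *s b = 0" by (simp add: vec_eq_iff)
  then show ?case by (simp add: lmono_0)
next
  case (Suc k)
  have "(of_nat (Suc k) :: int) *s b = b + of_nat k *s b" by (simp add: vec_eq_iff algebra_simps)
  then show ?case using Suc lmono_add[OF assms] by simp
qed

lemma lmono_sum: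
  assumes "\<forall>i. x i \<noteq> 0" and "finite J"
  shows "lmono x (\<Sum>j\<in>J. f j) = (\<Prod>j\<in>J. lmono x (f j))"
  using assms(2) by (induction J rule: finite_induct) (simp_all add: lmono_0 lmono_add[OF assms(1)])

lemma laurent_eval_eq:
  assumes "finite T" "{b. p b \<noteq> 0} \<subseteq> T"
  shows "laurent_eval p x = (\<Sum>b\<in>T. p b * lmono x b)"
  unfolding laurent_eval_def by (rule sum.mono_neutral_left) (use assms in auto)

lemma group_sum:
  fixes c :: "nat \<Rightarrow> 'k::field" and a :: "nat \<Rightarrow> int ^ 'n" and Y :: "int ^ 'n \<Rightarrow> 'k"
  assumes "finite J" "finite T" "a ` J \<subseteq> T"
  shows "(\<Sum>b\<in>T. of_int (b $ i) * (\<Sum>j\<in>{j\<in>J. a j = b}. c j) * Y b)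
       = (\<Sum>j\<in>J. of_int (a j $ i) * c j * Y (a j))"
proof -
  have "(\<Sum>b\<in>T. of_int (b $ i) * (\<Sum>j\<in>{j\<in>J. a j = b}. c j) * Y b)
      = (\<Sum>b\<in>T. \<Sum>j\<in>{j\<in>J. a j = b}. of_int (a j $ i) * c j * Y (a j))"
  proof (rule sum.cong[OF refl])
    fix b assume "b \<in> T"
    have "of_int (b $ i) * (\<Sum>j\<in>{j\<in>J. a j = b}. c j) * Y b
        = (\<Sum>j\<in>{j\<in>J. a j = b}. of_int (b $ i) * c j * Y b)"
      by (simp only: sum_distrib_left sum_distrib_right)
    also have "\<dots> = (\<Sum>j\<in>{j\<in>J. a j = b}. of_int (a j $ i) * c j * Y (a j))"
      by (rule sum.cong[OF refl]) simp
    finally show "of_int (b $ i) * (\<Sum>j\<in>{j\<in>J. a j = b}. c j) * Y b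
        = (\<Sum>j\<in>{j\<in>J. a j = b}. of_int (a j $ i) * c j * Y (a j))" .
  qed
  also have "\<dots> = (\<Sum>j\<in>J. of_int (a j $ i) * c j * Y (a j))"
    by (rule sum.group) (use assms in auto)
  finally show ?thesis .
qed

lemma fract_pow: "Fract (p :: 'a::idom) 1 ^ k = Fract (p ^ k) 1"
  by (induction k) (simp_all add: mult_fract One_fract_def)

lemma lam_pow: "lam ^ k = 1 \<Longrightarrow> k = 0"
proof -
  assume h: "lam ^ k = 1"
  have "lam ^ k = to_ac (Fract [:0, 1:] 1 ^ k)" by (simp only: lam_def to_ac_power)
  also have "\<dots> = to_ac (Fract ([:0, 1:] ^ k :: complex poly) 1)" by (simp only: fract_pow)
  finally have "to_ac (Fract ([:0, 1:] ^ k :: complex poly) 1) = to_ac 1" using h by simp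
  then have "Fract ([:0, 1:] ^ k :: complex poly) 1 = Fract 1 1"
    by (simp only: to_ac_eq_iff One_fract_def)
  then have "([:0, 1:] ^ k :: complex poly) = 1" by (simp add: eq_fract)
  then have "Polynomial.degree ([:0, 1:] ^ k :: complex poly) = 0" by simp
  then show "k = 0" by (simp add: degree_power_eq)
qed


theorem proposition5p1:
  fixes m :: nat and a :: "nat \<Rightarrow> int ^ 'n" and l :: "nat \<Rightarrow> nat"
  assumes indep: "inj_on a {1..m}"
      "\<And>c :: nat \<Rightarrow> real. (\<Sum>j\<in>{1..m}. c j *\<^sub>R rvec (a j)) = 0 \<Longrightarrow> \<forall>j\<in>{1..m}. c j = 0"
    and lpos: "\<forall>j\<in>{0..m}. l j > 0"
    and lgcd: "Gcd (l ` {0..m}) = 1"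
    and rel: "of_nat (l 0) *s a 0 = (\<Sum>j\<in>{1..m}. of_nat (l j) *s a j)"
    and lsum: "l 0 = (\<Sum>j\<in>{1..m}. l j)"
    and face: "\<sigma> face_of DeltaA m a" "\<sigma> \<noteq> {}" "0 \<notin> \<sigma>"
  shows "\<not> (\<exists>x :: 'n \<Rightarrow> Kbar. (\<forall>i. x i \<noteq> 0) \<and>
            (\<forall>i. laurent_eval (euler_deriv i (f_face m a l \<sigma>)) x = 0))"
proof
  assume "\<exists>x :: 'n \<Rightarrow> Kbar. (\<forall>i. x i \<noteq> 0) \<and>
            (\<forall>i. laurent_eval (euler_deriv i (f_face m a l \<sigma>)) x = 0)"
  then obtain x :: "'n \<Rightarrow> Kbar" where xnz: "\<forall>i. x i \<noteq> 0"
    and xz: "\<And>i. laurent_eval (euler_deriv i (f_face m a l \<sigma>)) x = 0" by blast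
  define T where "T = insert (a 0) (a ` {1..m})"
  define F where "F = f_face m a l \<sigma>"
  define Y where "Y = lmono x"
  have finT: "finite T" by (simp add: T_def)
  have Fz: "F b = 0" if "b \<notin> T" for b
    using that unfolding F_def f_face_def f_lam_def T_def
    by (auto intro!: sum.neutral)
  have E: "(\<Sum>b\<in>T. of_int (b $ i) * F b * Y b) = 0" for i
  proof -
    have "laurent_eval (euler_deriv i F) x = (\<Sum>b\<in>T. euler_deriv i F b * lmono x b)"
      by (rule laurent_eval_eq[OF finT]) (use Fz in \<open>auto simp: euler_deriv_def\<close>)
    then show ?thesis using xz[of i] by (simp add: F_def Y_def euler_deriv_def)
  qed
  have Ynz: "Y b \<noteq> 0" for b unfolding Y_def by (rule lmono_nz[OF xnz])
  have l0pos: "l 0 > 0" using lpos by auto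
  show False
  proof (cases "rvec (a 0) \<in> \<sigma>")
    case True
    have FF: "F b = (\<Sum>j\<in>{j\<in>{1..m}. a j = b}. of_nat (l j))
                      - (if a 0 = b then of_nat (l 0) * lam else 0)" for b
      using True by (simp add: F_def f_face_def f_lam_def)
    define c where "c j = of_nat (l j) * (Y (a j) - lam * Y (a 0))" for j
    have ceq: "(\<Sum>j\<in>{1..m}. c j * of_int (a j $ i)) = 0" for i
    proof -
      have relI: "int (l 0) * a 0 $ i = (\<Sum>j\<in>{1..m}. int (l j) * a j $ i)"
        using arg_cong[OF rel, of "\<lambda>v. v $ i"] by simp
      have relK: "of_nat (l 0) * of_int (a 0 $ i) = (\<Sum>j\<in>{1..m}. of_nat (l j) * of_int (a j $ i) :: Kbar)"
        using arg_cong[OF relI, of "of_int :: int \<Rightarrow> Kbar"] by simp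
      have s1: "(\<Sum>b\<in>T. of_int (b $ i) * F b * Y b)
          = (\<Sum>b\<in>T. of_int (b $ i) * (\<Sum>j\<in>{j\<in>{1..m}. a j = b}. of_nat (l j)) * Y b)
            - (\<Sum>b\<in>T. (if a 0 = b then of_int (a 0 $ i) * (of_nat (l 0) * lam) * Y (a 0) else 0))"
        unfolding sum_subtractf[symmetric] by (rule sum.cong[OF refl]) (auto simp: FF algebra_simps)
      have s2: "(\<Sum>b\<in>T. (if a 0 = b then of_int (a 0 $ i) * (of_nat (l 0) * lam) * Y (a 0) else 0))
          = of_int (a 0 $ i) * (of_nat (l 0) * lam) * Y (a 0)"
        using finT by (simp add: T_def)
      have s3: "(\<Sum>b\<in>T. of_int (b $ i) * (\<Sum>j\<in>{j\<in>{1..m}. a j = b}. of_nat (l j)) * Y b)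
          = (\<Sum>j\<in>{1..m}. of_int (a j $ i) * of_nat (l j) * Y (a j))"
        by (rule group_sum) (auto simp: T_def)
      have "0 = (\<Sum>j\<in>{1..m}. of_int (a j $ i) * of_nat (l j) * Y (a j))
              - lam * Y (a 0) * (of_nat (l 0) * of_int (a 0 $ i))"
        using E[of i] s1 s2 s3 by (simp add: algebra_simps)
      also have "\<dots> = (\<Sum>j\<in>{1..m}. c j * of_int (a j $ i))"
        unfolding relK c_def by (simp add: sum_distrib_left sum_subtractf algebra_simps)
      finally show ?thesis by simp
    qed
    have c0: "\<forall>j\<in>{1..m}. c j = 0"
      by (rule indepK[where J="{1..m}" and a=a and c=c]) (simp, erule indep(2), rule ceq)
    have Yj: "Y (a j) = lam * Y (a 0)" if "j \<in> {1..m}" for j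
    proof -
      have "l j > 0" using that lpos by auto
      moreover have "c j = 0" using c0 that by blast
      ultimately show ?thesis by (simp add: c_def)
    qed
    have "Y (a 0) ^ l 0 = Y (of_nat (l 0) *s a 0)" unfolding Y_def by (simp add: lmono_smult[OF xnz])
    also have "\<dots> = (\<Prod>j\<in>{1..m}. Y (a j) ^ l j)"
      unfolding rel Y_def by (simp add: lmono_sum[OF xnz] lmono_smult[OF xnz])
    also have "\<dots> = (\<Prod>j\<in>{1..m}. (lam * Y (a 0)) ^ l j)"
      by (rule prod.cong) (simp_all add: Yj)
    also have "\<dots> = (lam * Y (a 0)) ^ l 0"
      by (simp add: lsum power_sum)
    finally have "1 * Y (a 0) ^ l 0 = lam ^ l 0 * Y (a 0) ^ l 0"
      by (simp add: power_mult_distrib)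
    then have "lam ^ l 0 = 1" using Ynz[of "a 0"] by (simp del: mult_1)
    from lam_pow[OF this] show False using l0pos by simp
  next
    case False
    define S where "S = {j\<in>{1..m}. rvec (a j) \<in> \<sigma>}"
    have FF: "F b = (\<Sum>j\<in>{j\<in>S. a j = b}. of_nat (l j))" for b
    proof -
      have "{j\<in>{1..m}. a j = b \<and> rvec (a j) \<in> \<sigma>} = {j\<in>S. a j = b}" by (auto simp: S_def)
      then show ?thesis using False by (simp add: F_def f_face_def)
    qed
    have ceq: "(\<Sum>j\<in>S. (of_nat (l j) * Y (a j)) * of_int (a j $ i)) = 0" for i
    proof -
      have "(\<Sum>b\<in>T. of_int (b $ i) * F b * Y b) = (\<Sum>j\<in>S. of_int (a j $ i) * of_nat (l j) * Y (a j))"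
        unfolding FF by (rule group_sum) (auto simp: T_def S_def)
      then show ?thesis using E[of i] by (simp add: algebra_simps)
    qed
    have indS: "\<forall>j\<in>S. r j = 0" if h: "(\<Sum>j\<in>S. r j *\<^sub>R rvec (a j)) = 0" for r :: "nat \<Rightarrow> real"
    proof -
      have "(\<Sum>j\<in>{1..m}. (if j \<in> S then r j else 0) *\<^sub>R rvec (a j)) = (\<Sum>j\<in>S. r j *\<^sub>R rvec (a j))"
        by (simp add: if_distrib if_distribR sum.inter_filter[symmetric] S_def cong: if_cong)
      then have "(\<Sum>j\<in>{1..m}. (if j \<in> S then r j else 0) *\<^sub>R rvec (a j)) = 0" using h by simp
      from indep(2)[OF this] have "\<forall>j\<in>{1..m}. (if j \<in> S then r j else 0) = 0" .
      show ?thesis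
      proof
        fix j assume j: "j \<in> S"
        then have "j \<in> {1..m}" by (simp add: S_def)
        with \<open>\<forall>j\<in>{1..m}. (if j \<in> S then r j else 0) = 0\<close>
        have "(if j \<in> S then r j else 0) = 0" by (rule bspec)
        with j show "r j = 0" by simp
      qed
    qed
    have c0: "\<forall>j\<in>S. of_nat (l j) * Y (a j) = 0"
      by (rule indepK[where J=S and a=a]) (simp add: S_def, erule indS, rule ceq)
    have Sne: "S \<noteq> {}"
    proof -
      have cpt: "compact (insert 0 (rvec ` a ` {1..m}))"
        by (rule finite_imp_compact) simp
      have fc: "\<sigma> face_of convex hull (insert 0 (rvec ` a ` {1..m}))"
        using face(1) by (simp only: DeltaA_def)
      obtain S' where S'1: "S' \<subseteq> insert 0 (rvec ` a ` {1..m})" and S'2: "\<sigma> = convex hull S'"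
        by (rule face_of_convex_hull_subset[OF cpt fc])
      have "S' \<noteq> {}"
      proof
        assume "S' = {}"
        then have "\<sigma> = {}" using S'2 by simp
        then show False using face(2) by contradiction
      qed
      then obtain p where p: "p \<in> S'" by blast
      have "p \<in> \<sigma>" using S'2 p hull_subset[of S' convex] by blast
      then have "p \<noteq> 0" using face(3) by blast
      then have "p \<in> rvec ` a ` {1..m}" using S'1 p by blast
      then obtain j where j: "j \<in> {1..m}" "p = rvec (a j)" by blast
      then have "j \<in> S" using \<open>p \<in> \<sigma>\<close> unfolding S_def by blast
      then show ?thesis by blast
    qed
    then obtain j where "j \<in> S" by auto
    then have "j \<in> {0..m}" by (auto simp: S_def)
    then have "l j > 0" using lpos by auto
    then show False using c0 \<open>j \<in> S\<close> Ynz[of "a j"] by auto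
  qed
qed

end
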